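(* Let $\alpha,\beta,\gamma_1,\gamma_2,x$ be real numbers, $\lambda_1,\lambda_2$ nonnegative integers and $n$ a nonnegative integer. Then $$\sum_{k=0}^{n}\binom{n}{k}A_{k}^{\lambda_{1},x}(\alpha,\beta,\alpha+\beta+\gamma_{1})\,A_{n-k}^{\lambda_{2},x}(\alpha,\beta,\gamma_{2})=A_{n}^{\lambda_{1}+\lambda_{2},x}(\alpha,\beta,\alpha+\beta+\gamma_{1}+\gamma_{2}).$$
   Context: For a number $t$ and $\alpha$, the generalised factorial is $(t|\alpha)_n=\prod_{j=0}^{n-1}(t-j\alpha)$ for $n\ge 1$ and $(t|\alpha)_0=1$. For parameters $\alpha,\beta,\gamma$, the generalised Stirling numbers $S(n,k,\alpha,\beta,\gamma)$ ($0\le k\le n$) are defined by the polynomial identity $(t|\alpha)_n=\sum_{k=0}^{n}S(n,k,\alpha,\beta,\gamma)\,(t-\gamma|\beta)_k$ in the variable $t$. For a nonnegative integer $\lambda$ put $\binom{k+\lambda-1}{k}=\lambda(\lambda+1)\cdots(\lambda+k-1)/k!$ (equal to $1$ for $k=0$). Define $$A^{\lambda,x}_n(\alpha,\beta,\gamma)=\sum_{k=0}^{n}\binom{k+\lambda-1}{k}(-1)^{n+k}\beta^k k!\,S(n,k,\alpha,-\beta,-\gamma)\,x^k .$$ *)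

theory Defs
  imports Complex_Main
begin

definition gfact :: "real \<Rightarrow> real \<Rightarrow> nat \<Rightarrow> real" where
  "gfact t a n = (\<Prod>j<n. (t - of_nat j * a))"

text \<open>Generalised Stirling numbers S(n,k,alpha,beta,gamma): the unique coefficients
  with (t|alpha)_n = sum_{k=0}^n S(n,k) (t-gamma|beta)_k as polynomial identity in t.
  (The (t-gamma|beta)_k are monic of degree k, so the coefficients are unique.)\<close>
definition gstirling :: "nat \<Rightarrow> nat \<Rightarrow> real \<Rightarrow> real \<Rightarrow> real \<Rightarrow> real" where
  "gstirling n k a b g =
     (THE c :: nat \<Rightarrow> real. (\<forall>i>n. c i = 0) \<and>
        (\<forall>t. gfact t a n = (\<Sum>i\<le>n. c i * gfact (t - g) b i))) k"

text \<open>binom(k+lambda-1,k) = lambda(lambda+1)...(lambda+k-1)/k!\<close>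
definition nbinom :: "nat \<Rightarrow> nat \<Rightarrow> real" where
  "nbinom lam k = pochhammer (real lam) k / fact k"

definition Apoly :: "nat \<Rightarrow> real \<Rightarrow> nat \<Rightarrow> real \<Rightarrow> real \<Rightarrow> real \<Rightarrow> real" where
  "Apoly lam x n a b g =
     (\<Sum>k\<le>n. nbinom lam k * (-1) ^ (n + k) * b ^ k * fact k
              * gstirling n k a (- b) (- g) * x ^ k)"

end

theory Submission
  imports Defs "HOL-Computational_Algebra.Polynomial"
begin

lemma gfact_Suc: "gfact t a (Suc n) = gfact t a n * (t - of_nat n * a)"
  by (simp add: gfact_def)

definition gp :: "real \<Rightarrow> real \<Rightarrow> nat \<Rightarrow> real poly" where
  "gp G B i = (\<Prod>j<i. [: - G - of_nat j * B, 1 :])"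

lemma poly_gp: "poly (gp G B i) t = gfact (t - G) B i"
  by (simp add: gp_def gfact_def poly_prod algebra_simps)

lemma degree_gp: "degree (gp G B i) = i"
proof -
  have "degree (gp G B i) = (\<Sum>j<i. degree [: - G - of_nat j * B, 1 :])"
    unfolding gp_def by (rule degree_prod_eq_sum_degree) auto
  then show ?thesis by simp
qed

lemma lead_gp: "coeff (gp G B i) i = 1"
proof -
  have "lead_coeff (gp G B i) = 1" unfolding gp_def lead_coeff_prod by simp
  then show ?thesis using degree_gp[of G B i] by simp
qed

lemma coeff_gp_high: "i < k \<Longrightarrow> coeff (gp G B i) k = 0"
  using degree_gp[of G B i] by (simp add: coeff_eq_0)

lemma uniq_poly:
  "(\<Sum>i\<le>N. smult (c i) (gp G B i)) = 0 \<Longrightarrow> \<forall>i\<le>N. c i = 0"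
proof (induction N)
  case 0
  then show ?case using lead_gp[of G B 0] by (simp add: gp_def)
next
  case (Suc N)
  have "coeff (\<Sum>i\<le>Suc N. smult (c i) (gp G B i)) (Suc N) = c (Suc N)"
    by (simp add: coeff_sum lead_gp coeff_gp_high)
  then have cN: "c (Suc N) = 0" using Suc.prems by (metis coeff_0)
  then have "(\<Sum>i\<le>N. smult (c i) (gp G B i)) = 0" using Suc.prems by simp
  then show ?case using Suc.IH cN le_Suc_eq by auto
qed

lemma uniq0:
  assumes "\<forall>t. (\<Sum>i\<le>N. c i * gfact (t - G) B i) = 0"
  shows "\<forall>i\<le>N. c i = 0"
proof -
  have "\<forall>t. poly (\<Sum>i\<le>N. smult (c i) (gp G B i)) t = 0"
    using assms by (simp add: poly_sum poly_gp)
  then have "(\<Sum>i\<le>N. smult (c i) (gp G B i)) = 0" using poly_all_0_iff_0 by blast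
  then show ?thesis by (rule uniq_poly)
qed

lemma uniq:
  assumes "\<And>t. (\<Sum>i\<le>N. c i * gfact (t - G) B i) = (\<Sum>i\<le>N. d i * gfact (t - G) B i)"
    and "i \<le> N"
  shows "c i = d i"
proof -
  have "\<forall>t. (\<Sum>i\<le>N. (c i - d i) * gfact (t - G) B i) = 0"
    using assms(1) by (simp add: left_diff_distrib sum_subtractf)
  then show ?thesis using uniq0 assms(2) by fastforce
qed

lemma gfact_exist:
  "\<exists>c. (\<forall>i>n. c i = 0) \<and> (\<forall>t. gfact t a n = (\<Sum>i\<le>n. c i * gfact (t - G) B i))"
proof (induction n)
  case 0
  show ?case by (rule exI[of _ "\<lambda>i. if i = 0 then 1 else 0"]) (simp add: gfact_def)
next
  case (Suc n)
  then obtain c where c0: "\<forall>i>n. c i = 0"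
    and ce: "\<forall>t. gfact t a n = (\<Sum>i\<le>n. c i * gfact (t - G) B i)" by blast
  define d where "d k = (if k = 0 then 0 else c (k - 1)) + (G + of_nat k * B - of_nat n * a) * c k" for k
  have "\<forall>i>Suc n. d i = 0" using c0 by (simp add: d_def)
  moreover have "gfact t a (Suc n) = (\<Sum>i\<le>Suc n. d i * gfact (t - G) B i)" for t
  proof -
    have "(\<Sum>i\<le>Suc n. d i * gfact (t - G) B i)
        = (\<Sum>i\<le>Suc n. (if i = 0 then 0 else c (i - 1)) * gfact (t - G) B i)
          + (\<Sum>i\<le>Suc n. (G + of_nat i * B - of_nat n * a) * c i * gfact (t - G) B i)"
      by (simp add: d_def distrib_right sum.distrib)
    also have "(\<Sum>i\<le>Suc n. (if i = 0 then 0 else c (i - 1)) * gfact (t - G) B i)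
        = (\<Sum>i\<le>n. c i * gfact (t - G) B (Suc i))"
      by (subst sum.atMost_Suc_shift) simp
    also have "(\<Sum>i\<le>Suc n. (G + of_nat i * B - of_nat n * a) * c i * gfact (t - G) B i)
        = (\<Sum>i\<le>n. (G + of_nat i * B - of_nat n * a) * c i * gfact (t - G) B i)"
      using c0 by simp
    also have "(\<Sum>i\<le>n. c i * gfact (t - G) B (Suc i)) + \<dots>
        = (\<Sum>i\<le>n. c i * gfact (t - G) B i * (t - of_nat n * a))"
      by (simp add: sum.distrib[symmetric] gfact_Suc algebra_simps)
    also have "\<dots> = gfact t a (Suc n)"
      by (simp add: gfact_Suc ce sum_distrib_right)
    finally show ?thesis by simp
  qed
  ultimately show ?case by blast
qed

lemma gst_unique:
  "\<exists>!c. (\<forall>i>n. c i = 0) \<and> (\<forall>t. gfact t a n = (\<Sum>i\<le>n. c i * gfact (t - G) B i))"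
proof -
  obtain c where c: "(\<forall>i>n. c i = 0) \<and> (\<forall>t. gfact t a n = (\<Sum>i\<le>n. c i * gfact (t - G) B i))"
    using gfact_exist by blast
  show ?thesis
  proof (rule ex1I[of _ c])
    fix d assume d: "(\<forall>i>n. d i = 0) \<and> (\<forall>t. gfact t a n = (\<Sum>i\<le>n. d i * gfact (t - G) B i))"
    show "d = c"
    proof
      fix i show "d i = c i"
      proof (cases "i \<le> n")
        case True
        have "(\<Sum>i\<le>n. d i * gfact (t - G) B i) = (\<Sum>i\<le>n. c i * gfact (t - G) B i)" for t
          using c d by metis
        then show ?thesis by (rule uniq[OF _ True])
      next
        case False then show ?thesis using c d by auto
      qed
    qed
  qed (rule c)
qed

lemma gst:
  "(\<forall>i>n. gstirling n i a B G = 0) \<and>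
   (\<forall>t. gfact t a n = (\<Sum>i\<le>n. gstirling n i a B G * gfact (t - G) B i))"
  unfolding gstirling_def by (rule theI'[OF gst_unique[of n a G B]])

lemma gst_zero: "n < i \<Longrightarrow> gstirling n i a B G = 0"
  using gst by blast

lemma gst_exp: "gfact t a n = (\<Sum>i\<le>n. gstirling n i a B G * gfact (t - G) B i)"
  using gst by blast

lemma gfact_poch: "a \<noteq> 0 \<Longrightarrow> gfact t a n = (- a) ^ n * pochhammer (- t / a) n"
proof -
  assume a: "a \<noteq> 0"
  have "gfact t a n = (\<Prod>j<n. (- a) * (- t / a + of_nat j))"
    unfolding gfact_def by (rule prod.cong) (use a in \<open>auto simp: field_simps\<close>)
  also have "\<dots> = (- a) ^ n * pochhammer (- t / a) n"
    by (simp only: prod.distrib pochhammer_prod atLeast0LessThan prod_constant card_lessThan)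
  finally show ?thesis .
qed

lemma gfact_binom:
  "gfact (s + t) a n = (\<Sum>k\<le>n. real (n choose k) * gfact s a k * gfact t a (n - k))"
proof (cases "a = 0")
  case True
  then show ?thesis by (simp add: gfact_def binomial_ring)
next
  case False
  have "gfact (s + t) a n = (- a) ^ n * pochhammer (- s / a + - t / a) n"
    using False by (simp add: gfact_poch add_divide_distrib diff_divide_distrib)
  also have "\<dots> = (\<Sum>k\<le>n. (- a) ^ n * (real (n choose k) * pochhammer (- s / a) k * pochhammer (- t / a) (n - k)))"
    by (simp only: pochhammer_binomial_sum sum_distrib_left)
  also have "\<dots> = (\<Sum>k\<le>n. real (n choose k) * gfact s a k * gfact t a (n - k))"
  proof (rule sum.cong[OF refl])
    fix k assume "k \<in> {..n}"
    then have "(- a) ^ n = (- a) ^ k * (- a) ^ (n - k)" by (simp add: power_add[symmetric])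
    then show "(- a) ^ n * (real (n choose k) * pochhammer (- s / a) k * pochhammer (- t / a) (n - k))
        = real (n choose k) * gfact s a k * gfact t a (n - k)"
      using False by (simp add: gfact_poch)
  qed
  finally show ?thesis .
qed

lemma nbinom_vandermonde:
  "nbinom (l1 + l2) m = (\<Sum>i\<le>m. nbinom l1 i * nbinom l2 (m - i))"
proof -
  have "nbinom (l1 + l2) m = (\<Sum>i\<le>m. real (m choose i) * pochhammer (real l1) i * pochhammer (real l2) (m - i)) / fact m"
    by (simp add: nbinom_def pochhammer_binomial_sum)
  also have "\<dots> = (\<Sum>i\<le>m. nbinom l1 i * nbinom l2 (m - i))"
    unfolding sum_divide_distrib
  proof (rule sum.cong[OF refl])
    fix i assume "i \<in> {..m}"
    then have "real (m choose i) = fact m / (fact i * fact (m - i))"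
      by (simp add: binomial_fact)
    then show "real (m choose i) * pochhammer (real l1) i * pochhammer (real l2) (m - i) / fact m
        = nbinom l1 i * nbinom l2 (m - i)"
      by (simp add: nbinom_def field_simps)
  qed
  finally show ?thesis .
qed

lemma tri:
  fixes F :: "nat \<Rightarrow> nat \<Rightarrow> real"
  assumes "\<And>j l. n < j + l \<Longrightarrow> F j l = 0"
  shows "(\<Sum>m\<le>n. \<Sum>j\<le>m. F j (m - j)) = (\<Sum>j\<le>n. \<Sum>l\<le>n. F j l)"
proof -
  have "(\<Sum>j\<le>n. \<Sum>l\<le>n. F j l) = (\<Sum>(j,l)\<in>{..n}\<times>{..n}. F j l)"
    by (simp add: sum.cartesian_product)
  also have "\<dots> = (\<Sum>(j,l)\<in>{(j,l). j + l \<le> n}. F j l)"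
    by (rule sum.mono_neutral_right) (use assms not_le in fastforce)+
  also have "\<dots> = (\<Sum>m\<le>n. \<Sum>j\<le>m. F j (m - j))"
    by (rule sum.triangle_reindex_eq)
  finally show ?thesis by simp
qed

lemma gst_exp':
  assumes "k \<le> n"
  shows "gfact t a k = (\<Sum>i\<le>n. gstirling k i a B G * gfact (t - G) B i)"
proof -
  have "gfact t a k = (\<Sum>i\<le>k. gstirling k i a B G * gfact (t - G) B i)" by (rule gst_exp)
  also have "\<dots> = (\<Sum>i\<le>n. gstirling k i a B G * gfact (t - G) B i)"
    by (rule sum.mono_neutral_left) (use assms gst_zero in auto)
  finally show ?thesis .
qed

lemma coef:
  assumes "i \<le> n" "l \<le> n"
  shows "real ((i + l) choose i) * gstirling n (i + l) a B (G1 + G2)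
       = (\<Sum>k\<le>n. real (n choose k) * gstirling (n - k) l a B G2 * gstirling k i a B G1)"
proof -
  define S where "S m = gstirling n m a B (G1 + G2)" for m
  define S1 where "S1 k i = gstirling k i a B G1" for k i
  define S2 where "S2 k i = gstirling k i a B G2" for k i
  have stepA: "(\<Sum>j\<le>n. S (j + l) * real ((j + l) choose j) * gfact (s - G1) B j)
      = (\<Sum>k\<le>n. real (n choose k) * S2 (n - k) l * gfact s a k)" if "l \<le> n" for s l
  proof -
    have "(\<Sum>l\<le>n. (\<Sum>j\<le>n. S (j + l) * real ((j + l) choose j) * gfact (s - G1) B j) * gfact (t - G2) B l)
        = (\<Sum>l\<le>n. (\<Sum>k\<le>n. real (n choose k) * S2 (n - k) l * gfact s a k) * gfact (t - G2) B l)" for t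
    proof -
      have "gfact (s + t) a n = (\<Sum>m\<le>n. S m * gfact ((s - G1) + (t - G2)) B m)"
        unfolding S_def by (subst gst_exp[of _ _ _ B "G1 + G2"]) (simp add: algebra_simps)
      also have "\<dots> = (\<Sum>m\<le>n. \<Sum>j\<le>m. S (j + (m - j)) * real ((j + (m - j)) choose j) *
                         gfact (s - G1) B j * gfact (t - G2) B (m - j))"
        by (rule sum.cong[OF refl]) (simp add: gfact_binom sum_distrib_left mult.assoc)
      also have "\<dots> = (\<Sum>j\<le>n. \<Sum>l\<le>n. S (j + l) * real ((j + l) choose j) *
                         gfact (s - G1) B j * gfact (t - G2) B l)"
        by (rule tri) (simp add: S_def gst_zero)
      also have "\<dots> = (\<Sum>l\<le>n. (\<Sum>j\<le>n. S (j + l) * real ((j + l) choose j) * gfact (s - G1) B j) * gfact (t - G2) B l)"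
        by (subst sum.swap) (simp only: sum_distrib_right)
      finally have L: "gfact (s + t) a n = \<dots>" .
      have "gfact (s + t) a n = (\<Sum>k\<le>n. real (n choose k) * gfact s a k *
              (\<Sum>l\<le>n. S2 (n - k) l * gfact (t - G2) B l))"
        unfolding S2_def gfact_binom by (rule sum.cong[OF refl]) (simp add: gst_exp'[of _ n])
      also have "\<dots> = (\<Sum>k\<le>n. \<Sum>l\<le>n. real (n choose k) * S2 (n - k) l * gfact s a k * gfact (t - G2) B l)"
        by (simp add: sum_distrib_left mult_ac)
      also have "\<dots> = (\<Sum>l\<le>n. \<Sum>k\<le>n. real (n choose k) * S2 (n - k) l * gfact s a k * gfact (t - G2) B l)"
        by (rule sum.swap)
      also have "\<dots> = (\<Sum>l\<le>n. (\<Sum>k\<le>n. real (n choose k) * S2 (n - k) l * gfact s a k) * gfact (t - G2) B l)"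
        by (simp add: sum_distrib_right)
      finally show ?thesis using L by simp
    qed
    then show ?thesis by (rule uniq[OF _ that])
  qed
  have "(\<Sum>j\<le>n. S (j + l) * real ((j + l) choose j) * gfact (s - G1) B j)
      = (\<Sum>j\<le>n. (\<Sum>k\<le>n. real (n choose k) * S2 (n - k) l * S1 k j) * gfact (s - G1) B j)" for s
  proof -
    have "(\<Sum>k\<le>n. real (n choose k) * S2 (n - k) l * gfact s a k)
       = (\<Sum>k\<le>n. real (n choose k) * S2 (n - k) l * (\<Sum>j\<le>n. S1 k j * gfact (s - G1) B j))"
      unfolding S1_def by (rule sum.cong[OF refl]) (simp add: gst_exp'[of _ n])
    also have "\<dots> = (\<Sum>k\<le>n. \<Sum>j\<le>n. real (n choose k) * S2 (n - k) l * S1 k j * gfact (s - G1) B j)"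
      by (simp add: sum_distrib_left mult_ac)
    also have "\<dots> = (\<Sum>j\<le>n. \<Sum>k\<le>n. real (n choose k) * S2 (n - k) l * S1 k j * gfact (s - G1) B j)"
      by (rule sum.swap)
    also have "\<dots> = (\<Sum>j\<le>n. (\<Sum>k\<le>n. real (n choose k) * S2 (n - k) l * S1 k j) * gfact (s - G1) B j)"
      by (simp add: sum_distrib_right)
    finally show ?thesis using stepA[OF assms(2)] by simp
  qed
  from uniq[OF this assms(1)] show ?thesis by (simp add: S_def S1_def S2_def mult_ac)
qed

lemma Apoly_ext:
  assumes "k \<le> n"
  shows "Apoly l x k a b g = (\<Sum>i\<le>n. nbinom l i * (-1) ^ (k + i) * b ^ i * fact i
              * gstirling k i a (- b) (- g) * x ^ i)"
  unfolding Apoly_def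
  by (rule sum.mono_neutral_left) (use assms gst_zero in auto)

lemma mainlem:
  "(\<Sum>k\<le>n. real (n choose k) * Apoly l1 x k a b g1 * Apoly l2 x (n - k) a b g2)
   = Apoly (l1 + l2) x n a b (g1 + g2)"
proof -
  define S where "S m = gstirling n m a (- b) (- g1 + - g2)" for m
  define S1 where "S1 k i = gstirling k i a (- b) (- g1)" for k i
  define S2 where "S2 k i = gstirling k i a (- b) (- g2)" for k i
  define F where "F i l = nbinom l1 i * nbinom l2 l * b ^ (i + l) * fact i * fact l * x ^ (i + l)
      * (-1) ^ (n + i + l) * (real ((i + l) choose i) * S (i + l))" for i l
  have "(\<Sum>k\<le>n. real (n choose k) * Apoly l1 x k a b g1 * Apoly l2 x (n - k) a b g2)
     = (\<Sum>k\<le>n. \<Sum>i\<le>n. \<Sum>l\<le>n. real (n choose k) *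
          (nbinom l1 i * (-1) ^ (k + i) * b ^ i * fact i * S1 k i * x ^ i) *
          (nbinom l2 l * (-1) ^ (n - k + l) * b ^ l * fact l * S2 (n - k) l * x ^ l))"
    apply (rule sum.cong[OF refl])
    apply (simp add: Apoly_ext[of _ n] S1_def S2_def sum_distrib_left sum_distrib_right)
    apply (rule sum.swap)
    done
  also have "\<dots> = (\<Sum>i\<le>n. \<Sum>l\<le>n. \<Sum>k\<le>n. real (n choose k) *
          (nbinom l1 i * (-1) ^ (k + i) * b ^ i * fact i * S1 k i * x ^ i) *
          (nbinom l2 l * (-1) ^ (n - k + l) * b ^ l * fact l * S2 (n - k) l * x ^ l))"
    by (subst sum.swap) (rule sum.cong[OF refl], rule sum.swap)
  also have "\<dots> = (\<Sum>i\<le>n. \<Sum>l\<le>n. F i l)"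
  proof (intro sum.cong[OF refl])
    fix i l assume i: "i \<in> {..n}" and l: "l \<in> {..n}"
    have "(\<Sum>k\<le>n. real (n choose k) *
          (nbinom l1 i * (-1) ^ (k + i) * b ^ i * fact i * S1 k i * x ^ i) *
          (nbinom l2 l * (-1) ^ (n - k + l) * b ^ l * fact l * S2 (n - k) l * x ^ l))
        = (\<Sum>k\<le>n. (nbinom l1 i * nbinom l2 l * b ^ (i + l) * fact i * fact l * x ^ (i + l)
      * (-1) ^ (n + i + l)) * (real (n choose k) * S2 (n - k) l * S1 k i))"
    proof (rule sum.cong[OF refl])
      fix k assume "k \<in> {..n}"
      then have "k + i + (n - k + l) = n + i + l" by simp
      then have "(-1::real) ^ (k + i) * (-1) ^ (n - k + l) = (-1) ^ (n + i + l)"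
        by (metis power_add)
      then show "real (n choose k) *
          (nbinom l1 i * (-1) ^ (k + i) * b ^ i * fact i * S1 k i * x ^ i) *
          (nbinom l2 l * (-1) ^ (n - k + l) * b ^ l * fact l * S2 (n - k) l * x ^ l)
        = (nbinom l1 i * nbinom l2 l * b ^ (i + l) * fact i * fact l * x ^ (i + l)
      * (-1) ^ (n + i + l)) * (real (n choose k) * S2 (n - k) l * S1 k i)"
        by (simp add: power_add algebra_simps)
    qed
    also have "\<dots> = F i l"
      unfolding F_def sum_distrib_left[symmetric] S_def S1_def S2_def
      using coef[of i n l a "- b" "- g1" "- g2"] i l by simp
    finally show "(\<Sum>k\<le>n. real (n choose k) *
          (nbinom l1 i * (-1) ^ (k + i) * b ^ i * fact i * S1 k i * x ^ i) *
          (nbinom l2 l * (-1) ^ (n - k + l) * b ^ l * fact l * S2 (n - k) l * x ^ l)) = F i l" .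
  qed
  also have "\<dots> = (\<Sum>m\<le>n. \<Sum>i\<le>m. F i (m - i))"
    by (rule tri[symmetric]) (simp add: F_def S_def gst_zero)
  also have "\<dots> = (\<Sum>m\<le>n. nbinom (l1 + l2) m * (-1) ^ (n + m) * b ^ m * fact m * S m * x ^ m)"
  proof (rule sum.cong[OF refl])
    fix m assume "m \<in> {..n}"
    have "(\<Sum>i\<le>m. F i (m - i)) = (\<Sum>i\<le>m. (nbinom l1 i * nbinom l2 (m - i)) * ((-1) ^ (n + m) * b ^ m * fact m * S m * x ^ m))"
    proof (rule sum.cong[OF refl])
      fix i assume "i \<in> {..m}"
      then have im: "i \<le> m" by simp
      then have "fact i * fact (m - i) * real (m choose i) = (fact m :: real)"
        by (simp add: binomial_fact)
      then show "F i (m - i) = (nbinom l1 i * nbinom l2 (m - i)) * ((-1) ^ (n + m) * b ^ m * fact m * S m * x ^ m)"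
        unfolding F_def using im by (simp add: algebra_simps)
    qed
    also have "\<dots> = (\<Sum>i\<le>m. nbinom l1 i * nbinom l2 (m - i)) * ((-1) ^ (n + m) * b ^ m * fact m * S m * x ^ m)"
      by (simp only: sum_distrib_right)
    also have "\<dots> = nbinom (l1 + l2) m * ((-1) ^ (n + m) * b ^ m * fact m * S m * x ^ m)"
      by (simp only: nbinom_vandermonde)
    finally show "(\<Sum>i\<le>m. F i (m - i)) = nbinom (l1 + l2) m * (-1) ^ (n + m) * b ^ m * fact m * S m * x ^ m"
      by (simp only: mult.assoc)
  qed
  also have "\<dots> = Apoly (l1 + l2) x n a b (g1 + g2)"
    by (simp add: Apoly_def S_def)
  finally show ?thesis .
qed

theorem theorem10:
  fixes a b g1 g2 x :: real and l1 l2 n :: nat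
  shows "(\<Sum>k\<le>n. real (n choose k) * Apoly l1 x k a b (a + b + g1)
                                  * Apoly l2 x (n - k) a b g2)
         = Apoly (l1 + l2) x n a b (a + b + g1 + g2)"
  by (rule mainlem)

end
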